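(* Let $r\in\{-1,+1\}$ and $\Phi=rD_\phi$, i.e. $\Phi(x,y)=rD_\phi(x,y)$ on $\mathbb R^n\times\mathbb R^n$. For any proper $f:\mathbb R^n\to\overline{\mathbb R}$ the following are equivalent: (i) $f$ is lsc and $f-r\phi$ is convex; (ii) $f$ is left $\Phi$-convex; (iii) $f=-\overleftarrow{\mathrm{env}}_\phi(-\overrightarrow{\mathrm{env}}_\phi f)$ if $r=-1$, resp. $f=\overleftarrow{\mathrm{klee}}_\phi(\overrightarrow{\mathrm{klee}}_\phi f)$ if $r=+1$; (iv) there is $g:\mathbb R^n\to\overline{\mathbb R}$ with $f=-\overleftarrow{\mathrm{env}}_\phi g$ if $r=-1$, resp. $f=\overleftarrow{\mathrm{klee}}_\phi g$ if $r=+1$; (v) $f$ is the pointwise supremum of all functions of the form $r\phi+\langle v,\cdot\rangle+\delta$, $(v,\delta)\in\mathbb R^n\times\overline{\mathbb R}$, that are majorized by $f$; (vi) $f$ is lsc and $\partial_\Phi f(x)=\nabla\phi^*(\nabla\phi(x)-r\partial f(x))$ for all $x\in\mathbb R^n$.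
   Context: Standing assumption: $\phi:\mathbb R^n\to\mathbb R$ is convex, finite-valued, differentiable and strictly convex (Legendre with full domain), super-coercive; $\phi^*$ has the same properties and $\nabla\phi^*=(\nabla\phi)^{-1}$. $D_\phi(x,y)=\phi(x)-\phi(y)-\langle\nabla\phi(y),x-y\rangle$. $\partial f$ is the limiting subdifferential. Envelopes: $\overrightarrow{\mathrm{env}}_\phi f(y)=\inf_x\{f(x)+D_\phi(x,y)\}$, $\overleftarrow{\mathrm{env}}_\phi g(x)=\inf_y\{g(y)+D_\phi(x,y)\}$, $\overrightarrow{\mathrm{klee}}_\phi f(y)=\sup_x\{D_\phi(x,y)-f(x)\}$, $\overleftarrow{\mathrm{klee}}_\phi g(x)=\sup_y\{D_\phi(x,y)-g(y)\}$. Left $\Phi$-convex: $f=\sup_{i\in I}\Phi(\cdot,y_i)-\beta_i$ for some family $(y_i,\beta_i)\in\mathbb R^n\times\overline{\mathbb R}$ ($f\equiv-\infty$ if $I=\emptyset$). $\Phi$-subdifferential: for $\bar x\in\operatorname{dom}f$, $\partial_\Phi f(\bar x)=\{\bar y: f(x)\ge f(\bar x)+\Phi(x,\bar y)-\Phi(\bar x,\bar y)\ \forall x\}$, and $\partial_\Phi f(\bar x)=\emptyset$ if $\bar x\notin\operatorname{dom} f$. *)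

theory Defs
  imports "HOL-Analysis.Analysis" "HOL-Library.Extended_Real"
begin

definition strictly_convex_fun :: "('a::real_vector \<Rightarrow> real) \<Rightarrow> bool" where
  "strictly_convex_fun g \<longleftrightarrow>
     (\<forall>x y t. x \<noteq> y \<and> 0 < t \<and> t < 1 \<longrightarrow>
        g (t *\<^sub>R x + (1 - t) *\<^sub>R y) < t * g x + (1 - t) * g y)"

definition super_coercive :: "('a::real_normed_vector \<Rightarrow> real) \<Rightarrow> bool" where
  "super_coercive g \<longleftrightarrow> filterlim (\<lambda>x. g x / norm x) at_top at_infinity"

definition legendre_full :: "('a::euclidean_space \<Rightarrow> real) \<Rightarrow> ('a \<Rightarrow> 'a) \<Rightarrow> bool" where
  "legendre_full phi gphi \<longleftrightarrow>
     convex_on UNIV phi \<and> strictly_convex_fun phi \<and> super_coercive phi \<and>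
     (\<forall>x. (phi has_derivative (\<lambda>h. gphi x \<bullet> h)) (at x)) \<and> bij gphi"

definition bregman :: "('a::euclidean_space \<Rightarrow> real) \<Rightarrow> ('a \<Rightarrow> 'a) \<Rightarrow> 'a \<Rightarrow> 'a \<Rightarrow> real" where
  "bregman phi gphi x y = phi x - phi y - gphi y \<bullet> (x - y)"

definition fenv :: "('a::euclidean_space \<Rightarrow> real) \<Rightarrow> ('a \<Rightarrow> 'a) \<Rightarrow> ('a \<Rightarrow> ereal) \<Rightarrow> 'a \<Rightarrow> ereal" where
  "fenv phi gphi f y = (INF x. f x + ereal (bregman phi gphi x y))"

definition benv :: "('a::euclidean_space \<Rightarrow> real) \<Rightarrow> ('a \<Rightarrow> 'a) \<Rightarrow> ('a \<Rightarrow> ereal) \<Rightarrow> 'a \<Rightarrow> ereal" where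
  "benv phi gphi g x = (INF y. g y + ereal (bregman phi gphi x y))"

definition fklee :: "('a::euclidean_space \<Rightarrow> real) \<Rightarrow> ('a \<Rightarrow> 'a) \<Rightarrow> ('a \<Rightarrow> ereal) \<Rightarrow> 'a \<Rightarrow> ereal" where
  "fklee phi gphi f y = (SUP x. ereal (bregman phi gphi x y) - f x)"

definition bklee :: "('a::euclidean_space \<Rightarrow> real) \<Rightarrow> ('a \<Rightarrow> 'a) \<Rightarrow> ('a \<Rightarrow> ereal) \<Rightarrow> 'a \<Rightarrow> ereal" where
  "bklee phi gphi g x = (SUP y. ereal (bregman phi gphi x y) - g y)"

definition proper_fun :: "('a \<Rightarrow> ereal) \<Rightarrow> bool" where
  "proper_fun f \<longleftrightarrow> (\<forall>x. f x \<noteq> -\<infinity>) \<and> (\<exists>x. f x \<noteq> \<infinity>)"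

definition lsc_fun :: "('a::topological_space \<Rightarrow> ereal) \<Rightarrow> bool" where
  "lsc_fun f \<longleftrightarrow> (\<forall>x. f x \<le> Liminf (at x) f)"

definition ext_convex :: "('a::real_vector \<Rightarrow> ereal) \<Rightarrow> bool" where
  "ext_convex f \<longleftrightarrow> convex {(x, \<mu>::real). f x \<le> ereal \<mu>}"

definition left_Phi_convex :: "('a \<Rightarrow> 'a \<Rightarrow> real) \<Rightarrow> ('a \<Rightarrow> ereal) \<Rightarrow> bool" where
  "left_Phi_convex Phi f \<longleftrightarrow>
     (\<exists>S :: ('a \<times> ereal) set. \<forall>x. f x = (SUP p\<in>S. ereal (Phi x (fst p)) - snd p))"

definition Phi_subdiff :: "('a \<Rightarrow> 'a \<Rightarrow> real) \<Rightarrow> ('a \<Rightarrow> ereal) \<Rightarrow> 'a \<Rightarrow> 'a set" where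
  "Phi_subdiff Phi f xb =
     (if f xb < \<infinity> then {yb. \<forall>x. f x \<ge> f xb + ereal (Phi x yb - Phi xb yb)} else {})"

definition frechet_subdiff :: "('a::euclidean_space \<Rightarrow> ereal) \<Rightarrow> 'a \<Rightarrow> 'a set" where
  "frechet_subdiff f xb =
     {v. \<bar>f xb\<bar> \<noteq> \<infinity> \<and>
         (\<forall>e>0. \<exists>d>0. \<forall>x. norm (x - xb) < d \<longrightarrow>
            f x \<ge> f xb + ereal (v \<bullet> (x - xb) - e * norm (x - xb)))}"

definition limiting_subdiff :: "('a::euclidean_space \<Rightarrow> ereal) \<Rightarrow> 'a \<Rightarrow> 'a set" where
  "limiting_subdiff f xb =
     {v. \<bar>f xb\<bar> \<noteq> \<infinity> \<and>
         (\<exists>xs vs. xs \<longlonglongrightarrow> xb \<and> (\<lambda>k. f (xs k)) \<longlonglongrightarrow> f xb \<and> vs \<longlonglongrightarrow> v \<and>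
                  (\<forall>k. vs k \<in> frechet_subdiff f (xs k)))}"

end

theory Submission
  imports Defs
begin


definition lscl :: "('a::metric_space \<Rightarrow> ereal) \<Rightarrow> bool" where
  "lscl F \<longleftrightarrow> (\<forall>x M. M < F x \<longrightarrow> (\<exists>d>0. \<forall>y. dist y x < d \<longrightarrow> M < F y))"

lemma lsc_imp_lscl:
  fixes F :: "'a::metric_space \<Rightarrow> ereal"
  assumes "lsc_fun F" shows "lscl F"
  unfolding lscl_def
proof (intro allI impI)
  fix x M assume M: "M < F x"
  then have "M < Liminf (at x) F" using assms unfolding lsc_fun_def by (meson less_le_trans)
  then obtain e where e: "e > 0" "M < (INF y\<in>(ball x e - {x}). F y)"
    unfolding Liminf_at less_SUP_iff by auto
  show "\<exists>d>0. \<forall>y. dist y x < d \<longrightarrow> M < F y"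
  proof (intro exI[of _ e] conjI allI impI)
    fix y assume "dist y x < e"
    then show "M < F y"
    proof (cases "y = x")
      case False
      then have "y \<in> ball x e - {x}" using \<open>dist y x < e\<close> by (simp add: dist_commute)
      then show ?thesis using e(2) by (meson INF_lower less_le_trans)
    qed (use M in simp)
  qed (use e in simp)
qed

lemma lscl_imp_lsc:
  fixes F :: "'a::metric_space \<Rightarrow> ereal"
  assumes "lscl F" shows "lsc_fun F"
  unfolding lsc_fun_def
proof
  fix x
  show "F x \<le> Liminf (at x) F"
  proof (rule ccontr)
    assume "\<not> F x \<le> Liminf (at x) F"
    then have "Liminf (at x) F < F x" by simp
    then obtain M where M: "Liminf (at x) F < ereal M" "ereal M < F x" using ereal_dense2 by blast
    then obtain d where d: "d > 0" "\<forall>y. dist y x < d \<longrightarrow> ereal M < F y"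
      using assms unfolding lscl_def by blast
    have "ereal M \<le> (INF y\<in>(ball x d - {x}). F y)"
      using d by (intro INF_greatest) (auto simp: dist_commute less_imp_le)
    also have "\<dots> \<le> Liminf (at x) F" unfolding Liminf_at using d(1) by (auto intro!: SUP_upper)
    finally show False using M(1) by simp
  qed
qed



lemma lscl_add_cont:
  fixes F :: "'a::metric_space \<Rightarrow> ereal"
  assumes F: "lscl F" and c: "continuous_on UNIV c"
  shows "lscl (\<lambda>x. F x + ereal (c x))"
  unfolding lscl_def
proof (intro allI impI)
  fix x M assume M: "M < F x + ereal (c x)"
  then obtain M' where M': "M < ereal M'" "ereal M' < F x + ereal (c x)" using ereal_dense2 by blast
  obtain m where m: "ereal m < ereal M'" "M < ereal m" using ereal_dense2[OF M'(1)] by blast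
  have "ereal (M' - c x) < F x" using M'(2) by (cases "F x") auto
  then obtain d1 where d1: "d1 > 0" "\<forall>y. dist y x < d1 \<longrightarrow> ereal (M' - c x) < F y"
    using F unfolding lscl_def by blast
  have "isCont c x" using c by (simp add: continuous_on_eq_continuous_at)
  then obtain d2 where d2: "d2 > 0" "\<forall>y. dist y x < d2 \<longrightarrow> dist (c y) (c x) < M' - m"
  proof -
    have "M' - m > 0" using m(1) by simp
    then show ?thesis using that \<open>isCont c x\<close> unfolding continuous_at_eps_delta by blast
  qed
  show "\<exists>d>0. \<forall>y. dist y x < d \<longrightarrow> M < F y + ereal (c y)"
  proof (intro exI[of _ "min d1 d2"] conjI allI impI)
    fix y assume y: "dist y x < min d1 d2"
    have a: "ereal (M' - c x) < F y" using d1 y by simp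
    have b: "\<bar>c y - c x\<bar> < M' - m" using d2 y by (simp add: dist_real_def)
    have "ereal m < F y + ereal (c y)" using a b by (cases "F y") auto
    then show "M < F y + ereal (c y)" using m(2) by simp
  qed (use d1 d2 in simp)
qed

lemma lscl_SUP:
  fixes F :: "'a::metric_space \<Rightarrow> ereal"
  assumes F: "\<And>x. F x = (SUP p\<in>S. ereal (a p x) + b p)"
    and c: "\<And>p. p \<in> S \<Longrightarrow> continuous_on UNIV (a p)"
  shows "lscl F"
  unfolding lscl_def
proof (intro allI impI)
  fix x M assume "M < F x"
  then obtain p where p: "p \<in> S" "M < ereal (a p x) + b p" unfolding F less_SUP_iff by blast
  have "lscl (\<lambda>_::'a. b p)" unfolding lscl_def by (auto intro!: exI[of _ 1])
  then have "lscl (\<lambda>y. b p + ereal (a p y))"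
    using lscl_add_cont[OF _ c[OF p(1)]] by blast
  then obtain d where d: "d > 0" "\<forall>y. dist y x < d \<longrightarrow> M < b p + ereal (a p y)"
    using p(2) unfolding lscl_def by (metis add.commute)
  show "\<exists>d>0. \<forall>y. dist y x < d \<longrightarrow> M < F y"
  proof (intro exI[of _ d] conjI allI impI)
    fix y assume "dist y x < d"
    then have "M < ereal (a p y) + b p" using d by (simp add: add.commute)
    also have "\<dots> \<le> F y" unfolding F using p(1) by (rule SUP_upper)
    finally show "M < F y" .
  qed (use d in simp)
qed

lemma lscl_min:
  fixes F :: "'a::metric_space \<Rightarrow> ereal"
  assumes F: "lscl F" and K: "compact K" "K \<noteq> {}"
  shows "\<exists>x\<in>K. \<forall>y\<in>K. F x \<le> F y"
proof (rule ccontr)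
  assume "\<not> ?thesis"
  then have "\<forall>x\<in>K. \<exists>y\<in>K. F y < F x" by (auto simp: not_le)
  then have "\<forall>x\<in>K. \<exists>y M d. y \<in> K \<and> F y < ereal M \<and> d > 0 \<and> (\<forall>z. dist z x < d \<longrightarrow> ereal M < F z)"
    using F unfolding lscl_def by (meson ereal_dense2)
  then obtain yy MM dd where H: "\<And>x. x \<in> K \<Longrightarrow> yy x \<in> K \<and> F (yy x) < ereal (MM x) \<and> dd x > 0 \<and>
     (\<forall>z. dist z x < dd x \<longrightarrow> ereal (MM x) < F z)" by metis
  have "K \<subseteq> (\<Union>x\<in>K. ball x (dd x))" using H by force
  then obtain T where T: "T \<subseteq> K" "finite T" "K \<subseteq> (\<Union>x\<in>T. ball x (dd x))"
    using compactE_image[OF K(1), of K "\<lambda>x. ball x (dd x)"] by auto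
  have "T \<noteq> {}" using T(3) K(2) by auto
  obtain t where t: "t \<in> T" "\<forall>s\<in>T. MM t \<le> MM s"
    using ex_min_if_finite[of "MM ` T"] T(2) \<open>T \<noteq> {}\<close>
    by (metis (mono_tags, lifting) arg_min_if_finite(1) arg_min_least finite_imageI image_is_empty leI)
  have "yy t \<in> K" using H T(1) t(1) by blast
  then obtain s where s: "s \<in> T" "dist (yy t) s < dd s" using T(3) by (auto simp: dist_commute)
  have "ereal (MM s) < F (yy t)" using H[of s] s T(1) by blast
  also have "\<dots> < ereal (MM t)" using H[of t] t T(1) by blast
  finally show False using t(2) s(1) by fastforce
qed



definition affset :: "('a::real_inner \<Rightarrow> ereal) \<Rightarrow> ('a \<times> ereal) set" where
  "affset g = {(v, \<delta>). \<forall>z. ereal (v \<bullet> z) + \<delta> \<le> g z}"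

definition supaff :: "('a::real_inner \<Rightarrow> ereal) \<Rightarrow> 'a \<Rightarrow> ereal" where
  "supaff g x = (SUP p\<in>affset g. ereal (fst p \<bullet> x) + snd p)"

lemma supaff_le: "supaff g x \<le> g x"
  unfolding supaff_def affset_def by (auto intro!: SUP_least)

lemma ereal_le_by_reals:
  fixes a b :: ereal
  assumes "\<And>M. ereal M < a \<Longrightarrow> ereal M \<le> b" shows "a \<le> b"
proof (rule ccontr)
  assume "\<not> a \<le> b"
  then have "b < a" by simp
  then obtain M where "b < ereal M" "ereal M < a" using ereal_dense2 by blast
  then show False using assms by fastforce
qed

lemma prox_main:
  fixes g :: "'a::euclidean_space \<Rightarrow> ereal"
  assumes lsc: "lscl g" and nm: "\<And>x. g x \<noteq> -\<infinity>" and ex: "g p \<noteq> \<infinity>"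
    and H: "\<And>x v. v \<in> frechet_subdiff g x \<Longrightarrow> (\<forall>z. g x + ereal (v \<bullet> (z - x)) \<le> g z)"
  shows "g x0 \<le> supaff g x0"
proof (rule ereal_le_by_reals)
  fix M assume M: "ereal M < g x0"
  define gp where "gp = real_of_ereal (g p)"
  have gp: "g p = ereal gp" using ex nm[of p] unfolding gp_def by (cases "g p") auto
  define R where "R = norm (p - x0) + 1"
  have R1: "R \<ge> 1" unfolding R_def by simp
  define K where "K = cball x0 R"
  have K: "compact K" "K \<noteq> {}" "p \<in> K" unfolding K_def R_def by (auto simp: dist_norm norm_minus_commute) (smt (verit) norm_ge_zero)
  obtain xm where xm: "xm \<in> K" "\<forall>y\<in>K. g xm \<le> g y" using lscl_min[OF lsc K(1,2)] by blast
  define m where "m = real_of_ereal (g xm)"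
  have "g xm \<le> ereal gp" using xm K(3) gp by metis
  then have gm: "g xm = ereal m" using nm[of xm] unfolding m_def by (cases "g xm") auto
  have mK: "\<And>y. y \<in> K \<Longrightarrow> ereal m \<le> g y" using xm gm by metis
  have "m \<le> gp" using mK[OF K(3)] gp by simp
  obtain d0 where d0: "d0 > 0" "\<forall>y. dist y x0 < d0 \<longrightarrow> ereal M < g y"
    using lsc M unfolding lscl_def by blast
  define d where "d = min d0 1"
  have d: "d > 0" "d \<le> d0" "d \<le> 1" using d0 unfolding d_def by auto
  define k where "k = max 1 (max (gp - m + 1) ((M - m) / d\<^sup>2 + 1))"
  have k: "k \<ge> 1" "k \<ge> gp - m + 1" "k \<ge> (M - m) / d\<^sup>2 + 1" unfolding k_def by auto
  define F where "F = (\<lambda>y. g y + ereal (k * (norm (y - x0))\<^sup>2))"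
  have "continuous_on UNIV (\<lambda>y. k * (norm (y - x0))\<^sup>2)" by (intro continuous_intros)
  then have lF: "lscl F" unfolding F_def by (rule lscl_add_cont[OF lsc])
  obtain xk where xk: "xk \<in> K" "\<forall>y\<in>K. F xk \<le> F y" using lscl_min[OF lF K(1,2)] by blast
  have "F xk \<le> F p" using xk K(3) by blast
  then have Fxk: "F xk \<le> ereal (gp + k * (norm (p - x0))\<^sup>2)" unfolding F_def gp by simp
  define gk where "gk = real_of_ereal (g xk)"
  have gk: "g xk = ereal gk" using Fxk nm[of xk] unfolding gk_def F_def by (cases "g xk") auto
  have mk: "m \<le> gk" using mK[OF xk(1)] gk by simp
  have Fxk': "gk + k * (norm (xk - x0))\<^sup>2 \<le> gp + k * (norm (p - x0))\<^sup>2"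
    using Fxk unfolding F_def gk by simp
  have int: "norm (xk - x0) < R"
  proof (rule ccontr)
    assume "\<not> norm (xk - x0) < R"
    then have "norm (xk - x0) = R" using xk(1) unfolding K_def by (simp add: dist_norm norm_minus_commute)
    then have "m + k * R\<^sup>2 \<le> gp + k * (R - 1)\<^sup>2" using Fxk' mk unfolding R_def by simp
    then have "k * (2 * R - 1) \<le> gp - m" by (simp add: power2_eq_square algebra_simps)
    moreover have "k * 1 \<le> k * (2 * R - 1)" using k(1) R1 by (intro mult_left_mono) auto
    ultimately show False using k(2) by simp
  qed
  define v where "v = (2 * k) *\<^sub>R (x0 - xk)"
  have sq: "\<And>x. k * (norm (xk - x0))\<^sup>2 - k * (norm (x - x0))\<^sup>2 = v \<bullet> (x - xk) - k * (norm (x - xk))\<^sup>2"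
    unfolding v_def power2_norm_eq_inner
    by (simp add: inner_diff_left inner_diff_right inner_commute algebra_simps)
  have fr: "v \<in> frechet_subdiff g xk"
    unfolding frechet_subdiff_def
  proof (intro CollectI conjI allI impI)
    show "\<bar>g xk\<bar> \<noteq> \<infinity>" using gk by simp
    fix e :: real assume e: "e > 0"
    show "\<exists>d>0. \<forall>x. norm (x - xk) < d \<longrightarrow> g xk + ereal (v \<bullet> (x - xk) - e * norm (x - xk)) \<le> g x"
    proof (intro exI[of _ "min (R - norm (xk - x0)) (e / k)"] conjI allI impI)
      show "0 < min (R - norm (xk - x0)) (e / k)" using int e k(1) by simp
      fix x assume x: "norm (x - xk) < min (R - norm (xk - x0)) (e / k)"
      have "norm (x - x0) \<le> norm (x - xk) + norm (xk - x0)"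
        using norm_triangle_ineq[of "x - xk" "xk - x0"] by simp
      then have "x \<in> K" using x unfolding K_def by (simp add: dist_norm norm_minus_commute)
      then have "F xk \<le> F x" using xk by blast
      show "g xk + ereal (v \<bullet> (x - xk) - e * norm (x - xk)) \<le> g x"
      proof (cases "g x")
        case (real gx)
        have a: "gk + k * (norm (xk - x0))\<^sup>2 \<le> gx + k * (norm (x - x0))\<^sup>2"
          using \<open>F xk \<le> F x\<close> unfolding F_def gk real by simp
        have "k * norm (x - xk) \<le> e" using x k(1) by (simp add: field_simps)
        then have "k * (norm (x - xk))\<^sup>2 \<le> e * norm (x - xk)"
          unfolding power2_eq_square by (metis mult.assoc mult_right_mono norm_ge_zero)
        then show ?thesis using a sq[of x] unfolding gk real by simp
      qed (use nm in auto)
    qed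
  qed
  have glob: "\<forall>z. g xk + ereal (v \<bullet> (z - xk)) \<le> g z" using H[OF fr] .
  have mem: "(v, ereal (gk - v \<bullet> xk)) \<in> affset g"
  proof -
    have "\<And>z. v \<bullet> z + (gk - v \<bullet> xk) = gk + (v \<bullet> z - v \<bullet> xk)" by simp
    have "\<forall>z. ereal (v \<bullet> z) + ereal (gk - v \<bullet> xk) \<le> g z"
    proof
      fix z
      have "ereal (v \<bullet> z) + ereal (gk - v \<bullet> xk) = g xk + ereal (v \<bullet> (z - xk))"
        unfolding gk by (simp add: inner_diff_right)
      then show "ereal (v \<bullet> z) + ereal (gk - v \<bullet> xk) \<le> g z" using glob by simp
    qed
    then show ?thesis unfolding affset_def by simp
  qed
  have val: "ereal (v \<bullet> x0) + ereal (gk - v \<bullet> xk) = ereal (gk + 2 * k * (norm (xk - x0))\<^sup>2)"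
    unfolding v_def power2_norm_eq_inner by (simp add: inner_diff_left inner_diff_right inner_commute algebra_simps)
  have "M \<le> gk + 2 * k * (norm (xk - x0))\<^sup>2"
  proof (cases "norm (xk - x0) < d")
    case True
    then have "ereal M < g xk" using d0 d by (simp add: dist_norm)
    then have "M \<le> gk" using gk by simp
    moreover have "0 \<le> 2 * k * (norm (xk - x0))\<^sup>2" using k by simp
    ultimately show ?thesis by linarith
  next
    case False
    have "d\<^sup>2 \<le> (norm (xk - x0))\<^sup>2" using False d by (intro power_mono) auto
    then have "k * d\<^sup>2 \<le> k * (norm (xk - x0))\<^sup>2" using k by (intro mult_left_mono) auto
    moreover have "((M - m) / d\<^sup>2 + 1) * d\<^sup>2 \<le> k * d\<^sup>2" using k(3) by (intro mult_right_mono) auto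
    moreover have "((M - m) / d\<^sup>2 + 1) * d\<^sup>2 = M - m + d\<^sup>2" using d by (simp add: field_simps)
    moreover have "0 \<le> k * (norm (xk - x0))\<^sup>2" using k by simp
    moreover have "2 * k * (norm (xk - x0))\<^sup>2 = 2 * (k * (norm (xk - x0))\<^sup>2)" by simp
    moreover have "d\<^sup>2 > 0" using d by simp
    ultimately show ?thesis using mk by linarith
  qed
  then have "ereal M \<le> ereal (v \<bullet> x0) + ereal (gk - v \<bullet> xk)" using val by simp
  also have "\<dots> \<le> supaff g x0" unfolding supaff_def using mem by (auto intro!: SUP_upper2)
  finally show "ereal M \<le> supaff g x0" .
qed



lemma convex_frechet_global:
  fixes g :: "'a::euclidean_space \<Rightarrow> ereal"
  assumes cv: "ext_convex g" and v: "v \<in> frechet_subdiff g x"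
  shows "g x + ereal (v \<bullet> (z - x)) \<le> g z"
proof -
  from v have fin: "\<bar>g x\<bar> \<noteq> \<infinity>" and fr: "\<And>e. e > 0 \<Longrightarrow> \<exists>d>0. \<forall>y. norm (y - x) < d \<longrightarrow>
            g x + ereal (v \<bullet> (y - x) - e * norm (y - x)) \<le> g y"
    unfolding frechet_subdiff_def by auto
  obtain a where a: "g x = ereal a" using fin by (cases "g x") auto
  show ?thesis
  proof (cases "g z")
    case PInf then show ?thesis by simp
  next
    case MInf
    show ?thesis
    proof (rule ccontr)
      assume "\<not> ?thesis"
      define n where "n = norm (z - x)"
      have "z \<noteq> x" using MInf a by auto
      then have n: "n > 0" unfolding n_def by simp
      obtain d where d: "d > 0" "\<forall>y. norm (y - x) < d \<longrightarrow> g x + ereal (v \<bullet> (y - x) - 1 * norm (y - x)) \<le> g y"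
        using fr[of 1] by auto
      define t where "t = min (1/2) (d / (2 * n))"
      have t: "t > 0" "t < 1" "t * n < d" using n d unfolding t_def by (auto simp: min_def field_simps)
      define y where "y = t *\<^sub>R z + (1 - t) *\<^sub>R x"
      have yx: "y - x = t *\<^sub>R (z - x)" unfolding y_def by (simp add: algebra_simps)
      have ny: "norm (y - x) = t * n" unfolding yx n_def using t by simp
      define c where "c = a + t * (v \<bullet> (z - x)) - t * n - 1"
      have "(z, (c - (1 - t) * a) / t) \<in> {(x, \<mu>::real). g x \<le> ereal \<mu>}" using MInf by simp
      then have "t *\<^sub>R (z, (c - (1 - t) * a) / t) + (1 - t) *\<^sub>R (x, a) \<in> {(x, \<mu>::real). g x \<le> ereal \<mu>}"
        using cv a t unfolding ext_convex_def by (intro convexD) auto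
      then have "g y \<le> ereal c" unfolding y_def using t by (simp add: field_simps)
      moreover have "g x + ereal (v \<bullet> (y - x) - 1 * norm (y - x)) \<le> g y"
        using d(2) ny t(3) by (metis (no_types, lifting))
      ultimately have "g x + ereal (v \<bullet> (y - x) - 1 * norm (y - x)) \<le> ereal c" by (rule order_trans[rotated])
      then show False unfolding a c_def yx ny using t by (simp add: inner_scaleR_right n_def)
    qed
  next
    case (real b)
    show ?thesis
    proof (rule ccontr)
      assume "\<not> ?thesis"
      then have lt: "b < a + v \<bullet> (z - x)" using a real by simp
      define \<eta> where "\<eta> = a + v \<bullet> (z - x) - b"
      have eta: "\<eta> > 0" using lt unfolding \<eta>_def by simp
      have "z \<noteq> x" using lt a real by auto
      define n where "n = norm (z - x)"
      have n: "n > 0" using \<open>z \<noteq> x\<close> unfolding n_def by simp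
      obtain d where d: "d > 0" "\<forall>y. norm (y - x) < d \<longrightarrow> g x + ereal (v \<bullet> (y - x) - (\<eta> / (2 * n)) * norm (y - x)) \<le> g y"
        using fr[of "\<eta> / (2 * n)"] eta n by auto
      define t where "t = min (1/2) (d / (2 * n))"
      have t: "t > 0" "t < 1" "t * n < d" using n d unfolding t_def by (auto simp: min_def field_simps)
      define y where "y = t *\<^sub>R z + (1 - t) *\<^sub>R x"
      have yx: "y - x = t *\<^sub>R (z - x)" unfolding y_def by (simp add: algebra_simps)
      have ny: "norm (y - x) = t * n" unfolding yx n_def using t by simp
      have "(z, b) \<in> {(x, \<mu>::real). g x \<le> ereal \<mu>}" "(x, a) \<in> {(x, \<mu>::real). g x \<le> ereal \<mu>}"
        using real a by auto
      then have "t *\<^sub>R (z, b) + (1 - t) *\<^sub>R (x, a) \<in> {(x, \<mu>::real). g x \<le> ereal \<mu>}"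
        using cv t unfolding ext_convex_def by (intro convexD) auto
      then have up: "g y \<le> ereal (t * b + (1 - t) * a)" unfolding y_def by simp
      have lo: "g x + ereal (v \<bullet> (y - x) - (\<eta> / (2 * n)) * norm (y - x)) \<le> g y"
        using d(2) ny t(3) by (metis (no_types, lifting))
      have "a + t * (v \<bullet> (z - x)) - (\<eta> / (2 * n)) * (t * n) \<le> t * b + (1 - t) * a"
        using order_trans[OF lo up] unfolding a yx ny[unfolded yx] by (simp add: inner_scaleR_right)
      moreover have "(\<eta> / (2 * n)) * (t * n) = t * (\<eta> / 2)" using n by (simp add: field_simps)
      ultimately have "t * (a + v \<bullet> (z - x) - b) \<le> t * (\<eta> / 2)" by (simp add: algebra_simps)
      then have "a + v \<bullet> (z - x) - b \<le> \<eta> / 2" using t by simp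
      then show False using eta unfolding \<eta>_def by simp
    qed
  qed
qed



lemma global_frechet:
  fixes g :: "'a::euclidean_space \<Rightarrow> ereal"
  assumes fin: "\<bar>g x\<bar> \<noteq> \<infinity>" and gl: "\<And>z. g x + ereal (v \<bullet> (z - x)) \<le> g z"
  shows "v \<in> frechet_subdiff g x"
  unfolding frechet_subdiff_def
proof (intro CollectI conjI allI impI)
  fix e :: real assume "e > 0"
  show "\<exists>d>0. \<forall>y. norm (y - x) < d \<longrightarrow> g x + ereal (v \<bullet> (y - x) - e * norm (y - x)) \<le> g y"
  proof (intro exI[of _ 1] conjI allI impI)
    fix y
    have "g x + ereal (v \<bullet> (y - x) - e * norm (y - x)) \<le> g x + ereal (v \<bullet> (y - x))"
      using \<open>e > 0\<close> by (intro add_left_mono) simp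
    also have "\<dots> \<le> g y" by (rule gl)
    finally show "g x + ereal (v \<bullet> (y - x) - e * norm (y - x)) \<le> g y" .
  qed simp
qed (rule fin)

lemma supaff_convex:
  fixes g :: "'a::euclidean_space \<Rightarrow> ereal"
  assumes eq: "\<And>x. g x \<le> supaff g x"
  shows "ext_convex g"
  unfolding ext_convex_def
proof (rule convexI)
  fix P Q :: "'a \<times> real" and u w :: real
  assume P: "P \<in> {(x, \<mu>). g x \<le> ereal \<mu>}" and Q: "Q \<in> {(x, \<mu>). g x \<le> ereal \<mu>}"
    and u: "0 \<le> u" and w: "0 \<le> w" and uw: "u + w = 1"
  obtain x \<mu> where P': "P = (x, \<mu>)" by fastforce
  obtain y \<nu> where Q': "Q = (y, \<nu>)" by fastforce
  have gx: "g x \<le> ereal \<mu>" and gy: "g y \<le> ereal \<nu>" using P Q P' Q' by auto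
  have "supaff g (u *\<^sub>R x + w *\<^sub>R y) \<le> ereal (u * \<mu> + w * \<nu>)"
    unfolding supaff_def
  proof (rule SUP_least)
    fix p assume p: "p \<in> affset g"
    obtain v \<delta> where pv: "p = (v, \<delta>)" by fastforce
    have hx: "ereal (v \<bullet> x) + \<delta> \<le> ereal \<mu>" using p pv gx unfolding affset_def by (auto intro: order_trans)
    have hy: "ereal (v \<bullet> y) + \<delta> \<le> ereal \<nu>" using p pv gy unfolding affset_def by (auto intro: order_trans)
    show "ereal (fst p \<bullet> (u *\<^sub>R x + w *\<^sub>R y)) + snd p \<le> ereal (u * \<mu> + w * \<nu>)"
    proof (cases \<delta>)
      case (real d)
      have "v \<bullet> x + d \<le> \<mu>" "v \<bullet> y + d \<le> \<nu>" using hx hy real by auto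
      then have "u * (v \<bullet> x + d) + w * (v \<bullet> y + d) \<le> u * \<mu> + w * \<nu>"
        using u w by (intro add_mono mult_left_mono) auto
      moreover have "u * (v \<bullet> x + d) + w * (v \<bullet> y + d) = v \<bullet> (u *\<^sub>R x + w *\<^sub>R y) + d"
        using uw by (simp add: inner_add_right algebra_simps) (metis distrib_left mult.right_neutral)
      ultimately show ?thesis using pv real by simp
    qed (use hx pv in auto)
  qed
  then have "g (u *\<^sub>R x + w *\<^sub>R y) \<le> ereal (u * \<mu> + w * \<nu>)" using eq order_trans by blast
  then show "u *\<^sub>R P + w *\<^sub>R Q \<in> {(x, \<mu>). g x \<le> ereal \<mu>}" unfolding P' Q' by simp
qed

lemma frechet_sum:
  fixes f1 f2 :: "'a::euclidean_space \<Rightarrow> ereal"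
  assumes eq: "\<And>y. f2 y = f1 y + ereal (\<psi> y)"
    and der: "(\<psi> has_derivative (\<lambda>h. w \<bullet> h)) (at x)"
    and v: "v \<in> frechet_subdiff f1 x"
  shows "v + w \<in> frechet_subdiff f2 x"
proof -
  from v have fin: "\<bar>f1 x\<bar> \<noteq> \<infinity>" and fr: "\<And>e. e > 0 \<Longrightarrow> \<exists>d>0. \<forall>y. norm (y - x) < d \<longrightarrow>
            f1 x + ereal (v \<bullet> (y - x) - e * norm (y - x)) \<le> f1 y"
    unfolding frechet_subdiff_def by auto
  obtain a where a: "f1 x = ereal a" using fin by (cases "f1 x") auto
  have dd: "\<And>e. e > 0 \<Longrightarrow> \<exists>d>0. \<forall>y. norm (y - x) < d \<longrightarrow>
       norm (\<psi> y - \<psi> x - w \<bullet> (y - x)) \<le> e * norm (y - x)"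
    using der unfolding has_derivative_at_alt by blast
  show ?thesis
    unfolding frechet_subdiff_def
  proof (intro CollectI conjI allI impI)
    show "\<bar>f2 x\<bar> \<noteq> \<infinity>" using eq a by simp
    fix e :: real assume e: "e > 0"
    obtain d1 where d1: "d1 > 0" "\<forall>y. norm (y - x) < d1 \<longrightarrow> f1 x + ereal (v \<bullet> (y - x) - (e/2) * norm (y - x)) \<le> f1 y"
      using fr[of "e/2"] e by auto
    obtain d2 where d2: "d2 > 0" "\<forall>y. norm (y - x) < d2 \<longrightarrow> norm (\<psi> y - \<psi> x - w \<bullet> (y - x)) \<le> (e/2) * norm (y - x)"
      using dd[of "e/2"] e by auto
    show "\<exists>d>0. \<forall>y. norm (y - x) < d \<longrightarrow> f2 x + ereal ((v + w) \<bullet> (y - x) - e * norm (y - x)) \<le> f2 y"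
    proof (intro exI[of _ "min d1 d2"] conjI allI impI)
      fix y assume y: "norm (y - x) < min d1 d2"
      have h1: "f1 x + ereal (v \<bullet> (y - x) - (e/2) * norm (y - x)) \<le> f1 y" using d1 y by simp
      have h2: "\<psi> x + w \<bullet> (y - x) - (e/2) * norm (y - x) \<le> \<psi> y" using d2 y by (smt (verit) min_less_iff_conj real_norm_def)
      show "f2 x + ereal ((v + w) \<bullet> (y - x) - e * norm (y - x)) \<le> f2 y"
      proof (cases "f1 y")
        case (real b)
        then show ?thesis using h1 h2 unfolding eq a by (simp add: inner_add_left)
      qed (use h1 a eq in auto)
    qed (use d1 d2 in simp)
  qed
qed



lemma leg_deriv: "legendre_full phi gphi \<Longrightarrow> (phi has_derivative (\<lambda>h. gphi x \<bullet> h)) (at x)"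
  unfolding legendre_full_def by blast

lemma leg_cont: "legendre_full phi gphi \<Longrightarrow> continuous_on UNIV phi"
  by (intro continuous_at_imp_continuous_on ballI has_derivative_continuous[OF leg_deriv])

lemma leg_isCont: "legendre_full phi gphi \<Longrightarrow> isCont phi x"
  by (rule has_derivative_continuous[OF leg_deriv])

lemma leg_grad_ineq:
  fixes phi :: "'a::euclidean_space \<Rightarrow> real"
  assumes leg: "legendre_full phi gphi"
  shows "phi x + gphi x \<bullet> (z - x) \<le> phi z"
proof -
  have "convex_on UNIV phi" using leg unfolding legendre_full_def by blast
  then have "convex (epigraph UNIV phi)" by (rule convex_epigraphI)
  moreover have "epigraph UNIV phi = {(x, \<mu>). ereal (phi x) \<le> ereal \<mu>}"
    unfolding epigraph_def by auto
  ultimately have cv: "ext_convex (\<lambda>y. ereal (phi y))" unfolding ext_convex_def by simp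
  have "(0::'a) \<in> frechet_subdiff (\<lambda>_. 0) x" by (rule global_frechet) auto
  then have "0 + gphi x \<in> frechet_subdiff (\<lambda>y. ereal (phi y)) x"
  proof -
    have "0 + gphi x \<in> frechet_subdiff (\<lambda>y. ereal (phi y)) x"
      by (rule frechet_sum[of "\<lambda>y. ereal (phi y)" "\<lambda>_. 0" phi, OF _ leg_deriv[OF leg] \<open>0 \<in> frechet_subdiff (\<lambda>_. 0) x\<close>]) simp
    then show ?thesis by simp
  qed
  then have "ereal (phi x) + ereal (gphi x \<bullet> (z - x)) \<le> ereal (phi z)"
    using convex_frechet_global[OF cv] by simp
  then show ?thesis by simp
qed



lemma one_aux:
  fixes phi :: "'a::euclidean_space \<Rightarrow> real"
  assumes leg: "legendre_full phi gphi" and xs: "xs \<longlonglongrightarrow> x"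
    and u: "norm u = 1" and e: "e > 0"
  shows "\<forall>\<^sub>F k in sequentially. gphi (xs k) \<bullet> u \<le> gphi x \<bullet> u + e"
proof -
  have e3: "e/3 > 0" using e by simp
  obtain d where d: "d > 0" "\<And>y. norm (y - x) < d \<Longrightarrow> norm (phi y - phi x - gphi x \<bullet> (y - x)) \<le> (e/3) * norm (y - x)"
    using leg_deriv[OF leg, of x, unfolded has_derivative_at_alt] e3 by metis
  define t where "t = d / 2"
  have t: "t > 0" "t < d" using d unfolding t_def by auto
  have "norm ((x + t *\<^sub>R u) - x) < d" using t u by simp
  then have "norm (phi (x + t *\<^sub>R u) - phi x - gphi x \<bullet> ((x + t *\<^sub>R u) - x)) \<le> (e/3) * norm ((x + t *\<^sub>R u) - x)"
    by (rule d(2))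
  then have "\<bar>phi (x + t *\<^sub>R u) - phi x - t * (gphi x \<bullet> u)\<bar> \<le> (e/3) * t"
    using u t by (simp add: inner_scaleR_right)
  then have "phi (x + t *\<^sub>R u) - phi x - t * (gphi x \<bullet> u) \<le> (e/3) * t" by (rule abs_le_D1)
  then have A: "phi (x + t *\<^sub>R u) - phi x \<le> t * (gphi x \<bullet> u) + t * (e/3)"
    by (simp add: algebra_simps)
  have l1: "(\<lambda>k. phi (xs k + t *\<^sub>R u)) \<longlonglongrightarrow> phi (x + t *\<^sub>R u)"
    by (rule isCont_tendsto_compose[OF leg_isCont[OF leg]]) (rule tendsto_add[OF xs tendsto_const])
  have l2: "(\<lambda>k. phi (xs k)) \<longlonglongrightarrow> phi x"
    by (rule isCont_tendsto_compose[OF leg_isCont[OF leg] xs])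
  have te: "t * (e/3) > 0" using t e by simp
  have ev1: "\<forall>\<^sub>F k in sequentially. dist (phi (xs k + t *\<^sub>R u)) (phi (x + t *\<^sub>R u)) < t * (e/3)"
    using l1 te by (rule tendstoD)
  have ev2: "\<forall>\<^sub>F k in sequentially. dist (phi (xs k)) (phi x) < t * (e/3)"
    using l2 te by (rule tendstoD)
  show ?thesis
    using ev1 ev2
  proof eventually_elim
    case (elim k)
    have G: "phi (xs k) + gphi (xs k) \<bullet> ((xs k + t *\<^sub>R u) - xs k) \<le> phi (xs k + t *\<^sub>R u)"
      by (rule leg_grad_ineq[OF leg])
    then have "t * (gphi (xs k) \<bullet> u) \<le> phi (xs k + t *\<^sub>R u) - phi (xs k)"
      by (simp add: inner_scaleR_right)
    also have "\<dots> \<le> phi (x + t *\<^sub>R u) - phi x + 2 * (t * (e/3))"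
    proof -
      have "phi (xs k + t *\<^sub>R u) - phi (x + t *\<^sub>R u) < t * (e/3)"
        using elim(1) unfolding dist_real_def by (rule le_less_trans[OF abs_ge_self])
      moreover have "phi x - phi (xs k) < t * (e/3)"
        using elim(2) unfolding dist_real_def by (metis abs_minus_commute abs_ge_self le_less_trans)
      ultimately show ?thesis by linarith
    qed
    also have "\<dots> \<le> t * (gphi x \<bullet> u + e)" using A by (simp add: algebra_simps)
    finally have "t * (gphi (xs k) \<bullet> u) \<le> t * (gphi x \<bullet> u + e)" .
    then show ?case using t by simp
  qed
qed
lemma leg_grad_seq:
  fixes phi :: "'a::euclidean_space \<Rightarrow> real"
  assumes leg: "legendre_full phi gphi" and xs: "xs \<longlonglongrightarrow> x"
  shows "(\<lambda>k. gphi (xs k)) \<longlonglongrightarrow> gphi x"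
proof (rule tendsto_componentwise_iff[THEN iffD2], rule ballI)
  fix b :: 'a assume b: "b \<in> Basis"
  show "(\<lambda>k. gphi (xs k) \<bullet> b) \<longlonglongrightarrow> gphi x \<bullet> b"
  proof (rule tendstoI)
    fix e :: real assume e: "e > 0"
    have n1: "norm b = 1" "norm (-b) = 1" using b by auto
    have e2: "e/2 > 0" using e by simp
    show "\<forall>\<^sub>F k in sequentially. dist (gphi (xs k) \<bullet> b) (gphi x \<bullet> b) < e"
      using one_aux[OF leg xs n1(1) e2] one_aux[OF leg xs n1(2) e2]
    proof eventually_elim
      case (elim k)
      then have "gphi (xs k) \<bullet> b \<le> gphi x \<bullet> b + e/2" "gphi x \<bullet> b \<le> gphi (xs k) \<bullet> b + e/2"
        by (simp_all add: inner_minus_right)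
      then show ?case using e unfolding dist_real_def by linarith
    qed
  qed
qed



lemma ereal_fg: "(a::ereal) \<noteq> -\<infinity> \<Longrightarrow> a = (a - ereal c) + ereal c"
  by (cases a) auto

lemma deriv_scaled:
  assumes leg: "legendre_full phi gphi"
  shows "((\<lambda>y. c * phi y) has_derivative (\<lambda>h. (c *\<^sub>R gphi x) \<bullet> h)) (at x)"
proof -
  have "((\<lambda>y. c * phi y) has_derivative (\<lambda>h. c * (gphi x \<bullet> h))) (at x)"
    using has_derivative_mult_right[OF leg_deriv[OF leg]] .
  moreover have "(\<lambda>h. c * (gphi x \<bullet> h)) = (\<lambda>h. (c *\<^sub>R gphi x) \<bullet> h)" by (simp add: inner_scaleR_left)
  ultimately show ?thesis by (simp only:)
qed

lemma V_iff:
  fixes f :: "'a::euclidean_space \<Rightarrow> ereal" and c :: "'a \<Rightarrow> real"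
  assumes nm: "\<And>x. f x \<noteq> -\<infinity>"
  shows "(\<forall>x. f x = (SUP p\<in>{(v, \<delta>). \<forall>z. ereal (c z + v \<bullet> z) + \<delta> \<le> f z}. ereal (c x + fst p \<bullet> x) + snd p))
     \<longleftrightarrow> (\<forall>x. f x - ereal (c x) \<le> supaff (\<lambda>x. f x - ereal (c x)) x)"
proof -
  define g where "g = (\<lambda>x. f x - ereal (c x))"
  have fg: "\<And>x. f x = g x + ereal (c x)" unfolding g_def using ereal_fg nm by blast
  have pt: "ereal (c z + v \<bullet> z) + \<delta> \<le> f z \<longleftrightarrow> ereal (v \<bullet> z) + \<delta> \<le> g z" for z v \<delta>
    unfolding g_def using nm[of z] by (cases \<delta>; cases "f z") auto
  have set: "{(v, \<delta>). \<forall>z. ereal (c z + v \<bullet> z) + \<delta> \<le> f z} = affset g"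
    unfolding affset_def using pt by auto
  have ne: "affset g \<noteq> {}" unfolding affset_def by (auto intro!: exI[of _ 0] exI[of _ "-\<infinity>"])
  have val: "(SUP p\<in>affset g. ereal (c x + fst p \<bullet> x) + snd p) = supaff g x + ereal (c x)" for x
  proof -
    have "(SUP p\<in>affset g. ereal (c x + fst p \<bullet> x) + snd p) = (SUP p\<in>affset g. (ereal (fst p \<bullet> x) + snd p) + ereal (c x))"
      by (intro SUP_cong refl) (simp add: ac_simps)
    also have "\<dots> = supaff g x + ereal (c x)" unfolding supaff_def by (rule SUP_ereal_add_left[OF ne]) simp
    finally show ?thesis .
  qed
  have "f x = (SUP p\<in>affset g. ereal (c x + fst p \<bullet> x) + snd p) \<longleftrightarrow> g x \<le> supaff g x" for x
  proof -
    have "f x = (SUP p\<in>affset g. ereal (c x + fst p \<bullet> x) + snd p) \<longleftrightarrow> g x + ereal (c x) = supaff g x + ereal (c x)"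
      unfolding val fg ..
    also have "\<dots> \<longleftrightarrow> g x = supaff g x" by (simp add: ereal_add_cancel_right)
    also have "\<dots> \<longleftrightarrow> g x \<le> supaff g x" using supaff_le[of g x] by auto
    finally show ?thesis .
  qed
  then show ?thesis unfolding set g_def by simp
qed

lemma PS:
  fixes f :: "'a::euclidean_space \<Rightarrow> ereal"
  assumes nm: "\<And>x. f x \<noteq> -\<infinity>"
  shows "y \<in> Phi_subdiff (\<lambda>x y. r * bregman phi gphi x y) f x \<longleftrightarrow>
    (f x - ereal (r * phi x) < \<infinity> \<and>
     (\<forall>z. (f x - ereal (r * phi x)) + ereal ((- r *\<^sub>R gphi y) \<bullet> (z - x)) \<le> f z - ereal (r * phi z)))"
proof (cases "f x")
  case (real a)
  have ar: "r * (phi z - phi y - gphi y \<bullet> (z - y)) - r * (phi x - phi y - gphi y \<bullet> (x - y))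
      = r * phi z - r * phi x + (- r *\<^sub>R gphi y) \<bullet> (z - x)" for z
    by (simp add: inner_diff_right algebra_simps)
  have "f x + ereal (r * (phi z - phi y - gphi y \<bullet> (z - y)) - r * (phi x - phi y - gphi y \<bullet> (x - y))) \<le> f z
     \<longleftrightarrow> (f x - ereal (r * phi x)) + ereal ((- r *\<^sub>R gphi y) \<bullet> (z - x)) \<le> f z - ereal (r * phi z)" for z
    unfolding ar using nm[of z] real by (cases "f z") (auto simp: algebra_simps)
  then show ?thesis unfolding Phi_subdiff_def bregman_def using real by simp
next
  case PInf then show ?thesis unfolding Phi_subdiff_def by simp
qed (use nm in auto)




lemma LS:
  fixes f :: "'a::euclidean_space \<Rightarrow> ereal"
  assumes leg: "legendre_full phi gphi" and nm: "\<And>x. f x \<noteq> -\<infinity>"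
    and cv: "ext_convex (\<lambda>x. f x - ereal (r * phi x))"
  shows "v \<in> limiting_subdiff f x \<longleftrightarrow>
    (f x - ereal (r * phi x) < \<infinity> \<and>
     (\<forall>z. (f x - ereal (r * phi x)) + ereal ((v - r *\<^sub>R gphi x) \<bullet> (z - x)) \<le> f z - ereal (r * phi z)))"
proof -
  define g where "g = (\<lambda>x. f x - ereal (r * phi x))"
  have fg: "\<And>y. f y = g y + ereal (r * phi y)" unfolding g_def using ereal_fg nm by blast
  have gf: "\<And>y. g y = f y + ereal (- r * phi y)" unfolding g_def using nm
  proof -
    fix y show "f y - ereal (r * phi y) = f y + ereal (- r * phi y)" using nm[of y] by (cases "f y") auto
  qed
  have gnm: "\<And>y. g y \<noteq> -\<infinity>" unfolding g_def
  proof -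
    fix y show "f y - ereal (r * phi y) \<noteq> -\<infinity>" using nm[of y] by (cases "f y") auto
  qed
  have main: "v \<in> limiting_subdiff f x \<longleftrightarrow> (g x < \<infinity> \<and> (\<forall>z. g x + ereal ((v - r *\<^sub>R gphi x) \<bullet> (z - x)) \<le> g z))"
  proof (rule iffI[rotated])
    assume "g x < \<infinity> \<and> (\<forall>z. g x + ereal ((v - r *\<^sub>R gphi x) \<bullet> (z - x)) \<le> g z)"
    then have gx: "g x < \<infinity>" and gl: "\<And>z. g x + ereal ((v - r *\<^sub>R gphi x) \<bullet> (z - x)) \<le> g z" by auto
    have fin: "\<bar>g x\<bar> \<noteq> \<infinity>" using gx gnm[of x] by auto
    have "(v - r *\<^sub>R gphi x) \<in> frechet_subdiff g x" by (rule global_frechet[OF fin gl])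
    then have "(v - r *\<^sub>R gphi x) + r *\<^sub>R gphi x \<in> frechet_subdiff f x"
      by (rule frechet_sum[OF fg deriv_scaled[OF leg]])
    then have fr: "v \<in> frechet_subdiff f x" by simp
    then have ff: "\<bar>f x\<bar> \<noteq> \<infinity>" unfolding frechet_subdiff_def by auto
    have "\<exists>xs vs. xs \<longlonglongrightarrow> x \<and> (\<lambda>k. f (xs k)) \<longlonglongrightarrow> f x \<and> vs \<longlonglongrightarrow> v \<and> (\<forall>k. vs k \<in> frechet_subdiff f (xs k))"
      by (rule exI[of _ "\<lambda>_. x"], rule exI[of _ "\<lambda>_. v"]) (simp add: fr)
    then show "v \<in> limiting_subdiff f x"
      unfolding limiting_subdiff_def using ff by blast
  next
    assume "v \<in> limiting_subdiff f x"
    then obtain xs vs where ff: "\<bar>f x\<bar> \<noteq> \<infinity>" and xs: "xs \<longlonglongrightarrow> x" and fxs: "(\<lambda>k. f (xs k)) \<longlonglongrightarrow> f x"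
      and vs: "vs \<longlonglongrightarrow> v" and fr: "\<And>k. vs k \<in> frechet_subdiff f (xs k)"
      unfolding limiting_subdiff_def mem_Collect_eq by metis
    have cvg: "ext_convex g" using cv unfolding g_def .
    have glob: "g (xs k) + ereal ((vs k + (- r) *\<^sub>R gphi (xs k)) \<bullet> (z - xs k)) \<le> g z" for k z
    proof -
      have "vs k + (- r) *\<^sub>R gphi (xs k) \<in> frechet_subdiff g (xs k)"
        by (rule frechet_sum[OF gf deriv_scaled[OF leg] fr])
      then show ?thesis by (rule convex_frechet_global[OF cvg])
    qed
    obtain a where a: "f x = ereal a" using ff by (cases "f x") auto
    have gx: "g x < \<infinity>" unfolding g_def a by simp
    have "g x + ereal ((v - r *\<^sub>R gphi x) \<bullet> (z - x)) \<le> g z" for z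
    proof -
      define q where "q = (\<lambda>k. - r * phi (xs k) + (vs k + (- r) *\<^sub>R gphi (xs k)) \<bullet> (z - xs k))"
      have eqk: "g (xs k) + ereal ((vs k + (- r) *\<^sub>R gphi (xs k)) \<bullet> (z - xs k)) = f (xs k) + ereal (q k)" for k
        unfolding gf q_def by (cases "f (xs k)") auto
      have gs: "(\<lambda>k. gphi (xs k)) \<longlonglongrightarrow> gphi x" by (rule leg_grad_seq[OF leg xs])
      have ps: "(\<lambda>k. phi (xs k)) \<longlonglongrightarrow> phi x" by (rule isCont_tendsto_compose[OF leg_isCont[OF leg] xs])
      have "q \<longlonglongrightarrow> - r * phi x + (v + (- r) *\<^sub>R gphi x) \<bullet> (z - x)"
        unfolding q_def by (intro tendsto_add tendsto_mult tendsto_const tendsto_inner tendsto_scaleR tendsto_diff ps gs vs xs)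
      then have lq: "(\<lambda>k. ereal (q k)) \<longlonglongrightarrow> ereal (- r * phi x + (v + (- r) *\<^sub>R gphi x) \<bullet> (z - x))"
        by (rule tendsto_ereal)
      have lim: "(\<lambda>k. f (xs k) + ereal (q k)) \<longlonglongrightarrow> f x + ereal (- r * phi x + (v + (- r) *\<^sub>R gphi x) \<bullet> (z - x))"
        by (rule tendsto_add_ereal[OF ff _ fxs lq]) simp
      have "f x + ereal (- r * phi x + (v + (- r) *\<^sub>R gphi x) \<bullet> (z - x)) \<le> g z"
        proof (rule tendsto_le[OF trivial_limit_sequentially tendsto_const lim], intro always_eventually allI)
        fix k show "f (xs k) + ereal (q k) \<le> g z" using glob[of k z] unfolding eqk[of k] .
      qed
      moreover have "f x + ereal (- r * phi x + (v + (- r) *\<^sub>R gphi x) \<bullet> (z - x)) = g x + ereal ((v - r *\<^sub>R gphi x) \<bullet> (z - x))"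
        unfolding gf a by simp
      ultimately show ?thesis by simp
    qed
    then show "g x < \<infinity> \<and> (\<forall>z. g x + ereal ((v - r *\<^sub>R gphi x) \<bullet> (z - x)) \<le> g z)" using gx by auto
  qed
  then show ?thesis unfolding g_def by simp
qed



lemma ereal_sub_anti: "F \<le> \<beta> \<Longrightarrow> ereal a - \<beta> \<le> ereal a - (F::ereal)"
  by (cases F; cases \<beta>) auto

lemma klee_rep: "(SUP y. ereal (D x y) - G y) = (SUP p\<in>range (\<lambda>y. (y, G y)). ereal (D x (fst p)) - snd p)"
  by (simp add: image_image)

lemma env_rep: "- (INF y. G y + ereal (D x y)) = (SUP y. ereal (- D x y) - G y)"
proof -
  have "- (INF y. G y + ereal (D x y)) = (SUP y. - (G y + ereal (D x y)))"
    by (rule ereal_SUP_uminus_eq[symmetric])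
  also have "\<dots> = (SUP y. ereal (- D x y) - G y)"
  proof (intro SUP_cong refl)
    fix y show "- (G y + ereal (D x y)) = ereal (- D x y) - G y" by (cases "G y") auto
  qed
  finally show ?thesis .
qed

lemma klee_bi:
  fixes f :: "'a \<Rightarrow> ereal"
  assumes nm: "\<And>x. f x \<noteq> -\<infinity>"
    and S: "\<And>x. f x = (SUP p\<in>S. ereal (D x (fst p)) - snd p)"
  shows "f x = (SUP y. ereal (D x y) - (SUP z. ereal (D z y) - f z))"
proof (rule antisym)
  show "(SUP y. ereal (D x y) - (SUP z. ereal (D z y) - f z)) \<le> f x"
  proof (rule SUP_least)
    fix y
    have h: "ereal (D x y) - f x \<le> (SUP z. ereal (D z y) - f z)" by (rule SUP_upper) simp
    show "ereal (D x y) - (SUP z. ereal (D z y) - f z) \<le> f x"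
      using h nm[of x] by (cases "SUP z. ereal (D z y) - f z"; cases "f x") auto
  qed
next
  show "f x \<le> (SUP y. ereal (D x y) - (SUP z. ereal (D z y) - f z))"
    unfolding S[of x]
  proof (rule SUP_least)
    fix p assume p: "p \<in> S"
    obtain y \<beta> where pe: "p = (y, \<beta>)" by fastforce
    have "(SUP z. ereal (D z y) - f z) \<le> \<beta>"
    proof (rule SUP_least)
      fix z
      have "ereal (D z y) - \<beta> \<le> f z" unfolding S[of z] using p pe
        by (metis (no_types, lifting) SUP_upper fst_conv snd_conv)
      then show "ereal (D z y) - f z \<le> \<beta>" using nm[of z] by (cases \<beta>; cases "f z") auto
    qed
    then have "ereal (D x y) - \<beta> \<le> ereal (D x y) - (SUP z. ereal (D z y) - f z)" by (rule ereal_sub_anti)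
    also have "\<dots> \<le> (SUP y. ereal (D x y) - (SUP z. ereal (D z y) - f z))" by (rule SUP_upper) simp
    finally show "ereal (D x (fst p)) - snd p \<le> (SUP y. ereal (D x y) - (SUP z. ereal (D z y) - f z))"
      using pe by simp
  qed
qed

lemma env_bi:
  fixes f :: "'a \<Rightarrow> ereal"
  assumes nm: "\<And>x. f x \<noteq> -\<infinity>"
    and S: "\<And>x. f x = (SUP p\<in>S. ereal (- D x (fst p)) - snd p)"
  shows "f x = - (INF y. - (INF z. f z + ereal (D z y)) + ereal (D x y))"
  unfolding env_rep[of "\<lambda>y. - (INF z. f z + ereal (D z y))" D x]
proof (rule antisym)
  have key: "ereal (- D x (fst p)) - snd p \<le> (SUP y. ereal (- D x y) - - (INF z. f z + ereal (D z y)))"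
    if p: "p \<in> S" for p
  proof -
    obtain y \<beta> where pe: "p = (y, \<beta>)" by fastforce
    have "- \<beta> \<le> (INF z. f z + ereal (D z y))"
    proof (rule INF_greatest)
      fix z
      have "ereal (- D z y) - \<beta> \<le> f z" unfolding S[of z] using p pe
        by (metis (no_types, lifting) SUP_upper fst_conv snd_conv)
      then show "- \<beta> \<le> f z + ereal (D z y)" using nm[of z] by (cases \<beta>; cases "f z") auto
    qed
    then have "ereal (- D x y) - \<beta> \<le> ereal (- D x y) - - (INF z. f z + ereal (D z y))"
      by (intro ereal_sub_anti) (metis ereal_uminus_le_reorder)
    also have "\<dots> \<le> (SUP y. ereal (- D x y) - - (INF z. f z + ereal (D z y)))" by (rule SUP_upper) simp
    finally show "ereal (- D x (fst p)) - snd p \<le> (SUP y. ereal (- D x y) - - (INF z. f z + ereal (D z y)))"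
      using pe by simp
  qed
  show "f x \<le> (SUP y. ereal (- D x y) - - (INF z. f z + ereal (D z y)))"
    unfolding S[of x] by (rule SUP_least) (rule key)
next
  show "(SUP y. ereal (- D x y) - - (INF z. f z + ereal (D z y))) \<le> f x"
  proof (rule SUP_least)
    fix y
    have h: "(INF z. f z + ereal (D z y)) \<le> f x + ereal (D x y)" by (rule INF_lower) simp
    show "ereal (- D x y) - - (INF z. f z + ereal (D z y)) \<le> f x"
      using h nm[of x] by (cases "INF z. f z + ereal (D z y)"; cases "f x") auto
  qed
qed



lemma frechet_lim: "v \<in> frechet_subdiff f x \<Longrightarrow> v \<in> limiting_subdiff f x"
proof -
  assume fr: "v \<in> frechet_subdiff f x"
  then have ff: "\<bar>f x\<bar> \<noteq> \<infinity>" unfolding frechet_subdiff_def by auto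
  have "\<exists>xs vs. xs \<longlonglongrightarrow> x \<and> (\<lambda>k. f (xs k)) \<longlonglongrightarrow> f x \<and> vs \<longlonglongrightarrow> v \<and> (\<forall>k. vs k \<in> frechet_subdiff f (xs k))"
    by (rule exI[of _ "\<lambda>_. x"], rule exI[of _ "\<lambda>_. v"]) (simp add: fr)
  then show "v \<in> limiting_subdiff f x"
    unfolding limiting_subdiff_def using ff by blast
qed

lemma eA: "ereal (A + c) - \<beta> = ereal A + (ereal c - \<beta>)"
  by (cases \<beta>) auto

lemma phi_val: "r * bregman phi gphi x y = r * phi x + ((- r) *\<^sub>R gphi y) \<bullet> x + r * (gphi y \<bullet> y - phi y)"
  by (simp add: bregman_def inner_diff_right algebra_simps)

lemma g_plus: "(a::ereal) \<noteq> -\<infinity> \<Longrightarrow> a - ereal c = a + ereal (- c)"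
  by (cases a) auto



theorem mainTheorem5:
  fixes phi :: "'a::euclidean_space \<Rightarrow> real"
    and gphi :: "'a \<Rightarrow> 'a"
    and r :: real
    and f :: "'a \<Rightarrow> ereal"
  assumes leg: "legendre_full phi gphi"
    and r: "r = -1 \<or> r = 1"
    and proper: "proper_fun f"
  defines "Phi \<equiv> \<lambda>x y. r * bregman phi gphi x y"
  shows
   "((lsc_fun f \<and> ext_convex (\<lambda>x. f x - ereal (r * phi x)))
       \<longleftrightarrow> left_Phi_convex Phi f)
  \<and> (left_Phi_convex Phi f \<longleftrightarrow>
       (if r = -1 then f = (\<lambda>x. - benv phi gphi (\<lambda>y. - fenv phi gphi f y) x)
        else f = bklee phi gphi (fklee phi gphi f)))
  \<and> ((if r = -1 then f = (\<lambda>x. - benv phi gphi (\<lambda>y. - fenv phi gphi f y) x)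
        else f = bklee phi gphi (fklee phi gphi f)) \<longleftrightarrow>
       (\<exists>g :: 'a \<Rightarrow> ereal.
          if r = -1 then f = (\<lambda>x. - benv phi gphi g x) else f = bklee phi gphi g))
  \<and> ((\<exists>g :: 'a \<Rightarrow> ereal.
          if r = -1 then f = (\<lambda>x. - benv phi gphi g x) else f = bklee phi gphi g) \<longleftrightarrow>
       (\<forall>x. f x = (SUP p\<in>{(v, \<delta>). \<forall>z. ereal (r * phi z + v \<bullet> z) + \<delta> \<le> f z}.
                      ereal (r * phi x + fst p \<bullet> x) + snd p)))
  \<and> ((\<forall>x. f x = (SUP p\<in>{(v, \<delta>). \<forall>z. ereal (r * phi z + v \<bullet> z) + \<delta> \<le> f z}.
                      ereal (r * phi x + fst p \<bullet> x) + snd p)) \<longleftrightarrow>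
       (lsc_fun f \<and>
        (\<forall>x. Phi_subdiff Phi f x =
               inv gphi ` {gphi x - r *\<^sub>R v | v. v \<in> limiting_subdiff f x})))"
proof -
  have nm: "\<And>x. f x \<noteq> -\<infinity>" using proper unfolding proper_fun_def by auto
  obtain p0 where p0: "f p0 \<noteq> \<infinity>" using proper unfolding proper_fun_def by auto
  have bij: "bij gphi" using leg unfolding legendre_full_def by blast
  have invg: "\<And>y. inv gphi (gphi y) = y" using bij by (simp add: bij_is_inj)
  have ginv: "\<And>y. gphi (inv gphi y) = y" using bij by (simp add: bij_is_surj surj_f_inv_f)
  define g where "g = (\<lambda>x. f x - ereal (r * phi x))"
  have fg: "\<And>y. f y = g y + ereal (r * phi y)" unfolding g_def using ereal_fg nm by blast
  have gf: "g = (\<lambda>y. f y + ereal (- (r * phi y)))" unfolding g_def using g_plus nm by blast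
  have gnm: "\<And>y. g y \<noteq> -\<infinity>" unfolding gf using nm by (metis ereal_MInfty_eq_plus ereal_uminus_eq_iff uminus_ereal.simps(3) MInfty_neq_ereal(1))
  have gp0: "g p0 \<noteq> \<infinity>" unfolding gf using p0 by simp
  have contc: "continuous_on UNIV (\<lambda>x. c * phi x)" for c using leg_cont[OF leg] by (intro continuous_intros)

  have VgI: "(\<forall>x. f x = (SUP p\<in>{(v, \<delta>). \<forall>z. ereal (r * phi z + v \<bullet> z) + \<delta> \<le> f z}.
                      ereal (r * phi x + fst p \<bullet> x) + snd p)) \<longleftrightarrow> (\<forall>x. g x \<le> supaff g x)"
    unfolding g_def by (rule V_iff[OF nm])

  have V_I: "lsc_fun f \<and> ext_convex (\<lambda>x. f x - ereal (r * phi x))"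
    if V: "\<forall>x. f x = (SUP p\<in>{(v, \<delta>). \<forall>z. ereal (r * phi z + v \<bullet> z) + \<delta> \<le> f z}.
                      ereal (r * phi x + fst p \<bullet> x) + snd p)"
  proof
    have "lscl f"
    proof (rule lscl_SUP[where a="\<lambda>p x. r * phi x + fst p \<bullet> x" and b=snd])
      show "\<And>x. f x = (SUP p\<in>{(v, \<delta>). \<forall>z. ereal (r * phi z + v \<bullet> z) + \<delta> \<le> f z}. ereal (r * phi x + fst p \<bullet> x) + snd p)"
        using V by blast
      show "\<And>p. continuous_on UNIV (\<lambda>x. r * phi x + fst p \<bullet> x)"
        using leg_cont[OF leg] by (intro continuous_intros) auto
    qed
    then show "lsc_fun f" by (rule lscl_imp_lsc)
    have "\<forall>x. g x \<le> supaff g x" using V VgI by blast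
    then show "ext_convex (\<lambda>x. f x - ereal (r * phi x))" unfolding g_def[symmetric]
      using supaff_convex by blast
  qed

  have I_VI: "lsc_fun f \<and>
        (\<forall>x. Phi_subdiff Phi f x =
               inv gphi ` {gphi x - r *\<^sub>R v | v. v \<in> limiting_subdiff f x})"
    if I: "lsc_fun f \<and> ext_convex (\<lambda>x. f x - ereal (r * phi x))"
  proof (intro conjI allI)
    show "lsc_fun f" using I by blast
    have cv: "ext_convex (\<lambda>x. f x - ereal (r * phi x))" using I by blast
    fix x
    show "Phi_subdiff Phi f x = inv gphi ` {gphi x - r *\<^sub>R v | v. v \<in> limiting_subdiff f x}"
    proof (intro set_eqI iffI)
      fix y assume y: "y \<in> Phi_subdiff Phi f x"
      define v where "v = r *\<^sub>R (gphi x - gphi y)"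
      have h1: "v - r *\<^sub>R gphi x = (- r) *\<^sub>R gphi y" unfolding v_def by (simp add: algebra_simps)
      have h2: "gphi x - r *\<^sub>R v = gphi y" unfolding v_def using r by (auto simp: algebra_simps)
      have "y \<in> Phi_subdiff (\<lambda>x y. r * bregman phi gphi x y) f x" using y unfolding Phi_def .
      then have c: "f x - ereal (r * phi x) < \<infinity> \<and>
          (\<forall>z. (f x - ereal (r * phi x)) + ereal (((- r) *\<^sub>R gphi y) \<bullet> (z - x)) \<le> f z - ereal (r * phi z))"
        using PS[where f=f and r=r and phi=phi and gphi=gphi, OF nm] by simp
      then have "v \<in> limiting_subdiff f x" using LS[where f=f and r=r, OF leg nm cv] h1 by simp
      moreover have "y = inv gphi (gphi x - r *\<^sub>R v)" using h2 invg by simp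
      ultimately show "y \<in> inv gphi ` {gphi x - r *\<^sub>R v | v. v \<in> limiting_subdiff f x}" by blast
    next
      fix y assume "y \<in> inv gphi ` {gphi x - r *\<^sub>R v | v. v \<in> limiting_subdiff f x}"
      then obtain v where v: "v \<in> limiting_subdiff f x" and yv: "y = inv gphi (gphi x - r *\<^sub>R v)" by blast
      have gy: "gphi y = gphi x - r *\<^sub>R v" using yv ginv by simp
      have h: "(- r) *\<^sub>R gphi y = v - r *\<^sub>R gphi x" unfolding gy using r by (auto simp: algebra_simps)
      have "f x - ereal (r * phi x) < \<infinity> \<and>
          (\<forall>z. (f x - ereal (r * phi x)) + ereal ((v - r *\<^sub>R gphi x) \<bullet> (z - x)) \<le> f z - ereal (r * phi z))"
        using LS[where f=f and r=r, OF leg nm cv] v by blast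
      then have "f x - ereal (r * phi x) < \<infinity> \<and>
          (\<forall>z. (f x - ereal (r * phi x)) + ereal (((- r) *\<^sub>R gphi y) \<bullet> (z - x)) \<le> f z - ereal (r * phi z))"
        unfolding h .
      then have "y \<in> Phi_subdiff (\<lambda>x y. r * bregman phi gphi x y) f x"
        by (rule PS[where f=f and r=r and phi=phi and gphi=gphi, OF nm, THEN iffD2])
      then show "y \<in> Phi_subdiff Phi f x" unfolding Phi_def .
    qed
  qed

  have VI_V: "\<forall>x. f x = (SUP p\<in>{(v, \<delta>). \<forall>z. ereal (r * phi z + v \<bullet> z) + \<delta> \<le> f z}.
                      ereal (r * phi x + fst p \<bullet> x) + snd p)"
    if VI: "lsc_fun f \<and>
        (\<forall>x. Phi_subdiff Phi f x =
               inv gphi ` {gphi x - r *\<^sub>R v | v. v \<in> limiting_subdiff f x})"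
  proof -
    have lg: "lscl g" unfolding gf
      by (rule lscl_add_cont[OF lsc_imp_lscl]) (use VI contc[of "-r"] in auto)
    have H: "\<forall>z. g x + ereal (w \<bullet> (z - x)) \<le> g z" if w: "w \<in> frechet_subdiff g x" for x w
    proof -
      have "w + r *\<^sub>R gphi x \<in> frechet_subdiff f x"
        by (rule frechet_sum[OF fg deriv_scaled[OF leg] w])
      then have vl: "w + r *\<^sub>R gphi x \<in> limiting_subdiff f x" by (rule frechet_lim)
      define y where "y = inv gphi (gphi x - r *\<^sub>R (w + r *\<^sub>R gphi x))"
      have "y \<in> inv gphi ` {gphi x - r *\<^sub>R v | v. v \<in> limiting_subdiff f x}"
        unfolding y_def using vl by blast
      then have "y \<in> Phi_subdiff (\<lambda>x y. r * bregman phi gphi x y) f x" using VI unfolding Phi_def by blast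
      then have c: "\<forall>z. (f x - ereal (r * phi x)) + ereal (((- r) *\<^sub>R gphi y) \<bullet> (z - x)) \<le> f z - ereal (r * phi z)"
        using PS[where f=f and r=r and phi=phi and gphi=gphi, OF nm] by simp
      have "(- r) *\<^sub>R gphi y = w" unfolding y_def ginv using r by (auto simp: algebra_simps)
      then show ?thesis using c unfolding g_def by simp
    qed
    have "\<forall>x. g x \<le> supaff g x"
      using prox_main[OF lg gnm gp0 H] by blast
    then show ?thesis using VgI by blast
  qed

  have II_V: "(\<forall>x. f x = (SUP p\<in>{(v, \<delta>). \<forall>z. ereal (r * phi z + v \<bullet> z) + \<delta> \<le> f z}.
                      ereal (r * phi x + fst p \<bullet> x) + snd p))"
    if II: "left_Phi_convex Phi f"
  proof
    fix x
    obtain S where S: "\<And>x. f x = (SUP p\<in>S. ereal (Phi x (fst p)) - snd p)"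
      using II unfolding left_Phi_convex_def by blast
    show "f x = (SUP p\<in>{(v, \<delta>). \<forall>z. ereal (r * phi z + v \<bullet> z) + \<delta> \<le> f z}. ereal (r * phi x + fst p \<bullet> x) + snd p)"
    proof (rule antisym)
      show "f x \<le> (SUP p\<in>{(v, \<delta>). \<forall>z. ereal (r * phi z + v \<bullet> z) + \<delta> \<le> f z}. ereal (r * phi x + fst p \<bullet> x) + snd p)"
        unfolding S[of x]
      proof (rule SUP_least)
        fix p assume p: "p \<in> S"
        obtain y \<beta> where pe: "p = (y, \<beta>)" by fastforce
        define q where "q = ((- r) *\<^sub>R gphi y, ereal (r * (gphi y \<bullet> y - phi y)) - \<beta>)"
        have val: "ereal (Phi z y) - \<beta> = ereal (r * phi z + fst q \<bullet> z) + snd q" for z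
          unfolding Phi_def phi_val q_def by (simp add: eA)
        have "q \<in> {(v, \<delta>). \<forall>z. ereal (r * phi z + v \<bullet> z) + \<delta> \<le> f z}"
        proof -
          have "ereal (r * phi z + fst q \<bullet> z) + snd q \<le> f z" for z
            unfolding val[symmetric] S[of z] using p pe by (metis (no_types, lifting) SUP_upper fst_conv snd_conv)
          then show ?thesis by (cases q) auto
        qed
        then have "ereal (r * phi x + fst q \<bullet> x) + snd q \<le> (SUP p\<in>{(v, \<delta>). \<forall>z. ereal (r * phi z + v \<bullet> z) + \<delta> \<le> f z}. ereal (r * phi x + fst p \<bullet> x) + snd p)"
          by (rule SUP_upper)
        then show "ereal (Phi x (fst p)) - snd p \<le> (SUP p\<in>{(v, \<delta>). \<forall>z. ereal (r * phi z + v \<bullet> z) + \<delta> \<le> f z}. ereal (r * phi x + fst p \<bullet> x) + snd p)"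
          unfolding pe fst_conv snd_conv val .
      qed
      show "(SUP p\<in>{(v, \<delta>). \<forall>z. ereal (r * phi z + v \<bullet> z) + \<delta> \<le> f z}. ereal (r * phi x + fst p \<bullet> x) + snd p) \<le> f x"
        by (rule SUP_least) auto
    qed
  qed

  have V_II: "left_Phi_convex Phi f"
    if V: "\<forall>x. f x = (SUP p\<in>{(v, \<delta>). \<forall>z. ereal (r * phi z + v \<bullet> z) + \<delta> \<le> f z}.
                      ereal (r * phi x + fst p \<bullet> x) + snd p)"
  proof -
    define A where "A = {(v, \<delta>). \<forall>z. ereal (r * phi z + v \<bullet> z) + \<delta> \<le> f z}"
    define yy where "yy = (\<lambda>v::'a. inv gphi ((- r) *\<^sub>R v))"
    define T where "T = (\<lambda>q::'a \<times> ereal. (yy (fst q), ereal (r * (gphi (yy (fst q)) \<bullet> yy (fst q) - phi (yy (fst q)))) - snd q))"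
    have val: "ereal (Phi x (fst (T q))) - snd (T q) = ereal (r * phi x + fst q \<bullet> x) + snd q" for x q
    proof -
      have "(- r) *\<^sub>R gphi (yy (fst q)) = fst q" unfolding yy_def ginv using r by auto
      then show ?thesis unfolding Phi_def T_def phi_val by (cases "snd q") auto
    qed
    show ?thesis unfolding left_Phi_convex_def
    proof (intro exI[of _ "T ` A"] allI)
      fix x
      have "f x = (SUP q\<in>A. ereal (r * phi x + fst q \<bullet> x) + snd q)" using V unfolding A_def by blast
      also have "\<dots> = (SUP q\<in>A. ereal (Phi x (fst (T q))) - snd (T q))" unfolding val ..
      also have "\<dots> = (SUP p\<in>T ` A. ereal (Phi x (fst p)) - snd p)" by (simp add: image_image)
      finally show "f x = (SUP p\<in>T ` A. ereal (Phi x (fst p)) - snd p)" .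
    qed
  qed

  have II_III: "if r = -1 then f = (\<lambda>x. - benv phi gphi (\<lambda>y. - fenv phi gphi f y) x)
        else f = bklee phi gphi (fklee phi gphi f)"
    if II: "left_Phi_convex Phi f"
  proof -
    obtain S where S: "\<And>x. f x = (SUP p\<in>S. ereal (Phi x (fst p)) - snd p)"
      using II unfolding left_Phi_convex_def by blast
    show ?thesis
    proof (cases "r = -1")
      case True
      have S': "\<And>x. f x = (SUP p\<in>S. ereal (- bregman phi gphi x (fst p)) - snd p)"
        using S unfolding Phi_def True by simp
      show ?thesis using True
        by (auto simp: benv_def fenv_def intro!: ext env_bi[OF nm S'])
    next
      case False
      then have r1: "r = 1" using r by blast
      have S': "\<And>x. f x = (SUP p\<in>S. ereal (bregman phi gphi x (fst p)) - snd p)"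
        using S unfolding Phi_def r1 by simp
      show ?thesis using False
        by (auto simp: bklee_def fklee_def intro!: ext klee_bi[OF nm S'])
    qed
  qed

  have III_IV: "\<exists>g :: 'a \<Rightarrow> ereal.
          if r = -1 then f = (\<lambda>x. - benv phi gphi g x) else f = bklee phi gphi g"
    if III: "if r = -1 then f = (\<lambda>x. - benv phi gphi (\<lambda>y. - fenv phi gphi f y) x)
        else f = bklee phi gphi (fklee phi gphi f)"
  proof (cases "r = -1")
    case True then show ?thesis using III by (intro exI[of _ "\<lambda>y. - fenv phi gphi f y"]) simp
  next
    case False then show ?thesis using III by (intro exI[of _ "fklee phi gphi f"]) simp
  qed

  have IV_II: "left_Phi_convex Phi f"
    if IV: "\<exists>g :: 'a \<Rightarrow> ereal.
          if r = -1 then f = (\<lambda>x. - benv phi gphi g x) else f = bklee phi gphi g"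
  proof -
    obtain G where G: "if r = -1 then f = (\<lambda>x. - benv phi gphi G x) else f = bklee phi gphi G"
      using IV by blast
    show ?thesis unfolding left_Phi_convex_def
    proof (intro exI[of _ "range (\<lambda>y. (y, G y))"] allI)
      fix x
      show "f x = (SUP p\<in>range (\<lambda>y. (y, G y)). ereal (Phi x (fst p)) - snd p)"
      proof (cases "r = -1")
        case True
        then have "f x = - (INF y. G y + ereal (bregman phi gphi x y))" using G by (simp add: benv_def)
        also have "\<dots> = (SUP y. ereal (- bregman phi gphi x y) - G y)" by (rule env_rep)
        finally show ?thesis unfolding Phi_def True by (simp add: image_image)
      next
        case False
        then have r1: "r = 1" using r by blast
        have "f x = (SUP y. ereal (bregman phi gphi x y) - G y)" using G False by (simp add: bklee_def)
        then show ?thesis unfolding Phi_def r1 by (simp add: image_image)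
      qed
    qed
  qed

  show ?thesis
    using V_I I_VI VI_V II_V V_II II_III III_IV IV_II by meson
qed


end
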